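(* Let $B\subset\mathbb{R}^{n+1}$ be a symmetric convex body and let $x_i\to x$ be a convergent sequence in $S^n$. Assume each section $x_i^\perp\cap B$ is an affine symmetric body of revolution with an axis of revolution $L_i\subset x_i^\perp$, and that $L_i\to L$ in $\mathbb{R}P^n$. Then $x^\perp\cap B$ is an affine symmetric body of revolution with axis of revolution $L$.
   Context: A symmetric convex body is a compact convex set with nonempty interior invariant under $x\mapsto-x$. A symmetric convex body $K\subset\mathbb{R}^m$ is a symmetric body of revolution if it admits an axis of revolution: a 1-dimensional linear subspace $L$ such that every section of $K$ by an affine hyperplane $A$ orthogonal to $L$ is a closed Euclidean $(m-1)$-ball in $A$ centered at $A\cap L$ (possibly empty or a point). An affine symmetric body of revolution (in a linear subspace) is a convex body linearly equivalent to a symmetric body of revolution; the image of an axis under the linear equivalence is called an axis of revolution of it. $\mathbb{R}P^n$ is the space of 1-dimensional linear subspaces of $\mathbb{R}^{n+1}$ with its usual topology. *)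

theory Defs
  imports "HOL-Analysis.Analysis"
begin

definition sym_convex_body :: "'a::euclidean_space set \<Rightarrow> bool" where
  "sym_convex_body K \<longleftrightarrow> compact K \<and> convex K \<and> interior K \<noteq> {} \<and> uminus ` K = K"

text \<open>Symmetric convex body inside a linear subspace V: compact, convex, contained in V,
  with nonempty interior relative to V (i.e. full affine dimension in V), origin-symmetric.\<close>
definition sym_convex_body_in :: "'a::euclidean_space set \<Rightarrow> 'a set \<Rightarrow> bool" where
  "sym_convex_body_in V K \<longleftrightarrow> subspace V \<and> K \<subseteq> V \<and> compact K \<and> convex K \<and>
     aff_dim K = int (dim V) \<and> uminus ` K = K"

definition is_line :: "'a::euclidean_space set \<Rightarrow> bool" where
  "is_line L \<longleftrightarrow> subspace L \<and> dim L = 1"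

text \<open>Symmetric body of revolution in the subspace V with axis L: every section of K by an
  affine hyperplane of V orthogonal to L (these are exactly the sets
  {y \<in> V. y - c \<bottom> L} for c \<in> L, and c is their intersection point with L)
  is empty or a closed Euclidean ball of that hyperplane centred at c.\<close>
definition sym_body_of_revolution_in :: "'a::euclidean_space set \<Rightarrow> 'a set \<Rightarrow> 'a set \<Rightarrow> bool" where
  "sym_body_of_revolution_in V K L \<longleftrightarrow> sym_convex_body_in V K \<and> is_line L \<and> L \<subseteq> V \<and>
     (\<forall>c\<in>L. let A = {y \<in> V. \<forall>w\<in>L. (y - c) \<bullet> w = 0} in
        K \<inter> A = {} \<or> (\<exists>r\<ge>0. K \<inter> A = cball c r \<inter> A))"

definition affine_sym_body_of_revolution_in :: "'a::euclidean_space set \<Rightarrow> 'a set \<Rightarrow> 'a set \<Rightarrow> bool" where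
  "affine_sym_body_of_revolution_in V K L \<longleftrightarrow>
     (\<exists>T K0 L0. linear T \<and> inj_on T V \<and> T ` V = V \<and>
        sym_body_of_revolution_in V K0 L0 \<and> K = T ` K0 \<and> L = T ` L0)"

text \<open>Real projective space of the ambient space: the set of lines, with the quotient topology
  of the unit sphere under u \<mapsto> span {u}.\<close>
definition RP_lines :: "'a::euclidean_space set set" where
  "RP_lines = {span {u} | u. u \<in> sphere 0 1}"

definition RP_topology :: "'a::euclidean_space set topology" where
  "RP_topology = topology (\<lambda>U. U \<subseteq> RP_lines \<and>
      openin (top_of_set (sphere (0::'a) 1)) {u \<in> sphere 0 1. span {u} \<in> U})"

lemma istopology_RP:
  "istopology (\<lambda>U. U \<subseteq> (RP_lines :: 'a::euclidean_space set set) \<and>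
      openin (top_of_set (sphere (0::'a) 1)) {u \<in> sphere 0 1. span {u} \<in> U})"
  unfolding istopology_def
proof (rule conjI; intro allI impI)
  fix S T :: "'a set set"
  assume S: "S \<subseteq> RP_lines \<and> openin (top_of_set (sphere 0 1)) {u \<in> sphere 0 1. span {u} \<in> S}"
     and T: "T \<subseteq> RP_lines \<and> openin (top_of_set (sphere 0 1)) {u \<in> sphere 0 1. span {u} \<in> T}"
  have eq: "{u \<in> sphere (0::'a) 1. span {u} \<in> S \<inter> T} =
        {u \<in> sphere 0 1. span {u} \<in> S} \<inter> {u \<in> sphere 0 1. span {u} \<in> T}" by blast
  have o: "openin (top_of_set (sphere 0 1))
        ({u \<in> sphere (0::'a) 1. span {u} \<in> S} \<inter> {u \<in> sphere 0 1. span {u} \<in> T})"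
    using openin_Int[OF conjunct2[OF S] conjunct2[OF T]] .
  show "S \<inter> T \<subseteq> RP_lines \<and>
      openin (top_of_set (sphere 0 1)) {u \<in> sphere 0 1. span {u} \<in> S \<inter> T}"
  proof -
    have "S \<inter> T \<subseteq> RP_lines" using S by blast
    with o eq show ?thesis by simp
  qed
next
  fix K :: "'a set set set"
  assume K: "\<forall>S\<in>K. S \<subseteq> RP_lines \<and> openin (top_of_set (sphere 0 1)) {u \<in> sphere 0 1. span {u} \<in> S}"
  have eq: "{u \<in> sphere (0::'a) 1. span {u} \<in> \<Union>K} = (\<Union>S\<in>K. {u \<in> sphere 0 1. span {u} \<in> S})" by blast
  have o: "openin (top_of_set (sphere 0 1)) (\<Union>S\<in>K. {u \<in> sphere (0::'a) 1. span {u} \<in> S})"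
  proof (rule openin_Union)
    fix X assume "X \<in> (\<lambda>S. {u \<in> sphere (0::'a) 1. span {u} \<in> S}) ` K"
    then obtain S where "S \<in> K" and X: "X = {u \<in> sphere (0::'a) 1. span {u} \<in> S}" by blast
    then show "openin (top_of_set (sphere 0 1)) X" using K X by simp
  qed
  show "\<Union>K \<subseteq> RP_lines \<and>
      openin (top_of_set (sphere 0 1)) {u \<in> sphere 0 1. span {u} \<in> \<Union>K}"
  proof -
    have "\<Union>K \<subseteq> RP_lines" using K by blast
    with o eq show ?thesis by simp
  qed
qed

lemma openin_RP_topology:
  "openin RP_topology U \<longleftrightarrow> U \<subseteq> RP_lines \<and>
      openin (top_of_set (sphere 0 1)) {u \<in> sphere 0 1. span {u} \<in> U}"
  by (simp only: RP_topology_def topology_inverse'[OF istopology_RP])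

end

theory Submission
  imports Defs
begin


lemma unit_span_eq:
  fixes a b :: "'a::euclidean_space"
  assumes "norm a = 1" "norm b = 1" "span {a} = span {b}"
  shows "a = b \<or> a = - b"
proof -
  have "a \<in> span {b}" using assms(3) span_base by blast
  then obtain k where k: "a = k *\<^sub>R b" by (auto simp: span_singleton)
  then have "\<bar>k\<bar> = 1" using assms by simp
  then show ?thesis using k by (cases "k \<ge> 0") auto
qed

lemma in_span_unit:
  fixes a w :: "'a::euclidean_space"
  assumes "norm a = 1" "w \<in> span {a}"
  shows "w = (w \<bullet> a) *\<^sub>R a"
proof -
  obtain k where k: "w = k *\<^sub>R a" using assms(2) by (auto simp: span_singleton)
  have "a \<bullet> a = 1" using assms(1) by (simp add: norm_eq_1)
  then show ?thesis using k by simp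
qed

lemma line_unit:
  fixes M :: "'a::euclidean_space set"
  assumes "is_line M"
  obtains m where "m \<in> M" "norm m = 1" "M = span {m}"
proof -
  obtain C where C: "C \<subseteq> M" "independent C" "M \<subseteq> span C" "card C = dim M"
    using basis_exists by blast
  then have "card C = 1" using assms by (simp add: is_line_def)
  then obtain b where b: "C = {b}" using card_1_singletonE by blast
  then have "b \<noteq> 0" using C(2) by auto
  have sM: "span {b} = M" using C b assms
    by (metis is_line_def span_minimal span_subspace subset_antisym)
  define m where "m = b /\<^sub>R norm b"
  have "span {m} = span {b}"
  proof -
    have 1: "{m} \<subseteq> span {b}" unfolding m_def by (simp add: span_base span_mul)
    have "b = norm b *\<^sub>R m" unfolding m_def using \<open>b \<noteq> 0\<close> by simp
    then have 2: "{b} \<subseteq> span {m}" by (metis empty_subsetI insert_subset span_base span_mul singletonI)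
    show ?thesis using 1 2 span_eq by blast
  qed
  show ?thesis
  proof
    show "m \<in> M" using sM \<open>span {m} = span {b}\<close> span_base by blast
    show "norm m = 1" using \<open>b \<noteq> 0\<close> by (simp add: m_def)
    show "M = span {m}" using sM \<open>span {m} = span {b}\<close> by simp
  qed
qed



lemma norm_sub_proj_eq:
  fixes m y z :: "'a::euclidean_space"
  assumes "norm m = 1" "y \<bullet> m = z \<bullet> m" "norm y = norm z"
  shows "norm (z - (y \<bullet> m) *\<^sub>R m) = norm (y - (y \<bullet> m) *\<^sub>R m)"
proof -
  have mm: "m \<bullet> m = 1" using assms(1) by (simp add: norm_eq_1)
  have yy: "y \<bullet> y = z \<bullet> z" using assms(3) by (metis power2_norm_eq_inner)
  have "(norm (z - (y \<bullet> m) *\<^sub>R m))\<^sup>2 = (norm (y - (y \<bullet> m) *\<^sub>R m))\<^sup>2"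
    unfolding power2_norm_eq_inner
    using mm yy assms(2) by (simp add: inner_diff_left inner_diff_right inner_commute algebra_simps)
  then show ?thesis by (simp add: power2_eq_iff_nonneg)
qed

lemma rev_invariance:
  fixes K0 :: "'a::euclidean_space set"
  assumes rev: "sym_body_of_revolution_in V K0 M" and m: "norm m = 1" "M = span {m}"
    and yz: "y \<in> V" "z \<in> V" "y \<bullet> m = z \<bullet> m" "norm y = norm z" "y \<in> K0"
  shows "z \<in> K0"
proof -
  define c where "c = (y \<bullet> m) *\<^sub>R m"
  have mm: "m \<bullet> m = 1" using m(1) by (simp add: norm_eq_1)
  have cM: "c \<in> M" unfolding c_def m(2) by (simp add: span_base span_mul)
  define A where "A = {w \<in> V. \<forall>w'\<in>M. (w - c) \<bullet> w' = 0}"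
  have orth: "(w - c) \<bullet> w' = 0" if h1: "w \<bullet> m = y \<bullet> m" and h2: "w' \<in> M" for w w'
  proof -
    obtain k where "w' = k *\<^sub>R m" using h2 unfolding m(2) by (auto simp: span_singleton)
    then show ?thesis using h1 mm by (simp add: c_def inner_diff_left)
  qed
  have yA: "y \<in> A" unfolding A_def using yz orth by auto
  have zA: "z \<in> A" unfolding A_def using yz orth by auto
  have "K0 \<inter> A = {} \<or> (\<exists>r\<ge>0. K0 \<inter> A = cball c r \<inter> A)"
    using rev cM unfolding sym_body_of_revolution_in_def A_def Let_def by blast
  then obtain r where r: "K0 \<inter> A = cball c r \<inter> A" using yA yz(5) by blast
  have "dist c y \<le> r" using r yA yz(5) by auto
  moreover have "dist c z = dist c y"
    using norm_sub_proj_eq[OF m(1) yz(3) yz(4)] by (simp add: dist_norm norm_minus_commute c_def)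
  ultimately have "z \<in> cball c r \<inter> A" using zA by auto
  then show ?thesis using r by blast
qed



lemma pyth_comb:
  fixes m h :: "'a::euclidean_space"
  assumes "norm m = 1" "h \<bullet> m = 0"
  shows "(norm (\<alpha> *\<^sub>R m + \<beta> *\<^sub>R h))\<^sup>2 = \<alpha>\<^sup>2 + \<beta>\<^sup>2 * (norm h)\<^sup>2"
proof -
  have mm: "m \<bullet> m = 1" using assms(1) by (simp add: norm_eq_1)
  have mh: "m \<bullet> h = 0" using assms(2) by (simp add: inner_commute)
  have "(norm (\<alpha> *\<^sub>R m + \<beta> *\<^sub>R h))\<^sup>2 = (\<alpha> *\<^sub>R m + \<beta> *\<^sub>R h) \<bullet> (\<alpha> *\<^sub>R m + \<beta> *\<^sub>R h)"
    by (rule power2_norm_eq_inner)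
  also have "\<dots> = \<alpha> * \<alpha> * (m \<bullet> m) + \<alpha> * \<beta> * (m \<bullet> h) + \<beta> * \<alpha> * (h \<bullet> m) + \<beta> * \<beta> * (h \<bullet> h)"
    by (simp only: inner_add_left inner_add_right inner_scaleR_left inner_scaleR_right algebra_simps)
  also have "\<dots> = \<alpha>\<^sup>2 + \<beta>\<^sup>2 * (h \<bullet> h)" using mm mh assms(2) by (simp add: power2_eq_square)
  also have "\<dots> = \<alpha>\<^sup>2 + \<beta>\<^sup>2 * (norm h)\<^sup>2" by (simp only: power2_norm_eq_inner)
  finally show ?thesis .
qed

lemma proj_orth:
  fixes m y :: "'a::euclidean_space"
  assumes "norm m = 1"
  shows "(y - (y \<bullet> m) *\<^sub>R m) \<bullet> m = 0"
proof -
  have mm: "m \<bullet> m = 1" using assms(1) by (simp add: norm_eq_1)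
  show ?thesis using mm by (simp add: inner_diff_left)
qed

lemma proj_norm_sq:
  fixes m y :: "'a::euclidean_space"
  assumes "norm m = 1"
  shows "(norm y)\<^sup>2 = (y \<bullet> m)\<^sup>2 + (norm (y - (y \<bullet> m) *\<^sub>R m))\<^sup>2"
proof -
  have "y = (y \<bullet> m) *\<^sub>R m + 1 *\<^sub>R (y - (y \<bullet> m) *\<^sub>R m)" by simp
  then have "(norm y)\<^sup>2 = (norm ((y \<bullet> m) *\<^sub>R m + 1 *\<^sub>R (y - (y \<bullet> m) *\<^sub>R m)))\<^sup>2" by simp
  also have "\<dots> = (y \<bullet> m)\<^sup>2 + 1\<^sup>2 * (norm (y - (y \<bullet> m) *\<^sub>R m))\<^sup>2"
    by (rule pyth_comb[OF assms proj_orth[OF assms]])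
  finally show ?thesis by simp
qed

lemma proj_bounds:
  fixes m y :: "'a::euclidean_space"
  assumes "norm m = 1"
  shows "\<bar>y \<bullet> m\<bar> \<le> norm y" "norm (y - (y \<bullet> m) *\<^sub>R m) \<le> norm y"
proof -
  have e: "(norm y)\<^sup>2 = (y \<bullet> m)\<^sup>2 + (norm (y - (y \<bullet> m) *\<^sub>R m))\<^sup>2" by (rule proj_norm_sq[OF assms])
  have "\<bar>y \<bullet> m\<bar> \<le> norm y * norm m" by (rule Cauchy_Schwarz_ineq2)
  then show "\<bar>y \<bullet> m\<bar> \<le> norm y" using assms by simp
  have "(norm (y - (y \<bullet> m) *\<^sub>R m))\<^sup>2 \<le> (norm y)\<^sup>2" using e zero_le_power2[of "y \<bullet> m"] by linarith
  then show "norm (y - (y \<bullet> m) *\<^sub>R m) \<le> norm y"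
    by (rule power2_le_imp_le) simp
qed

lemma convex_scale0:
  assumes "convex K" "0 \<in> K" "w \<in> K" "0 \<le> l" "l \<le> 1"
  shows "l *\<^sub>R w \<in> K"
proof -
  have "(1 - l) *\<^sub>R 0 + l *\<^sub>R w \<in> K" using convexD_alt[OF assms(1) assms(2) assms(3)] assms(4,5) by blast
  then show ?thesis by simp
qed

lemma convex_mid:
  assumes "convex K" "p \<in> K" "q \<in> K"
  shows "(1/2) *\<^sub>R p + (1/2) *\<^sub>R q \<in> K"
  using convexD[OF assms, of "1/2" "1/2"] by simp



lemma normalize:
  fixes B V :: "'a::euclidean_space set"
  assumes cvB: "convex B" and ballB: "ball 0 \<rho> \<subseteq> B" and rho: "\<rho> > 0" and subV: "subspace V"
    and aff: "affine_sym_body_of_revolution_in V (V \<inter> B) Li"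
  shows "\<exists>N m. linear N \<and> m \<in> V \<and> norm m = 1 \<and> N ` V \<subseteq> V \<and>
     (\<forall>y\<in>V. norm y \<le> 1/2 \<longrightarrow> N y \<in> B) \<and> (\<forall>y\<in>V. N y \<in> B \<longrightarrow> norm y \<le> 2) \<and>
     (\<forall>y\<in>V. \<forall>z\<in>V. y \<bullet> m = z \<bullet> m \<and> norm y = norm z \<and> N y \<in> B \<longrightarrow> N z \<in> B) \<and> N m \<in> Li"
proof -
  obtain T K0 M where T: "linear T" "inj_on T V" "T ` V = V" and rev: "sym_body_of_revolution_in V K0 M"
    and KK: "V \<inter> B = T ` K0" and LL: "Li = T ` M"
    using aff unfolding affine_sym_body_of_revolution_in_def by blast
  have scb: "sym_convex_body_in V K0" and lineM: "is_line M" and MV: "M \<subseteq> V"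
    using rev unfolding sym_body_of_revolution_in_def by auto
  have K0V: "K0 \<subseteq> V" and cK0: "compact K0" and cvK0: "convex K0" and symK0: "uminus ` K0 = K0"
    using scb unfolding sym_convex_body_in_def by auto
  have neg: "- w \<in> K0" if "w \<in> K0" for w using symK0 that by force
  obtain m where mM: "m \<in> M" and m1: "norm m = 1" and Mm: "M = span {m}"
    using line_unit[OF lineM] by blast
  have mV: "m \<in> V" using mM MV by blast
  have mm: "m \<bullet> m = 1" using m1 by (simp add: norm_eq_1)
  have f1: "T w \<in> B \<longleftrightarrow> w \<in> K0" if wV: "w \<in> V" for w
  proof
    assume "w \<in> K0" then show "T w \<in> B" using KK by blast
  next
    assume "T w \<in> B"
    moreover have "T w \<in> V" using T(3) wV by blast
    ultimately have "T w \<in> T ` K0" using KK by blast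
    then obtain k where "k \<in> K0" "T w = T k" by blast
    then show "w \<in> K0" using T(2) K0V wV by (metis inj_on_def subsetD)
  qed
  have inv: "z \<in> K0" if "y \<in> V" "z \<in> V" "y \<bullet> m = z \<bullet> m" "norm y = norm z" "y \<in> K0" for y z
    using rev_invariance[OF rev m1 Mm that] .
  obtain C where C: "C > 0" "\<And>x. norm (T x) \<le> C * norm x" using linear_bounded_pos[OF T(1)] by blast
  define eps where "eps = \<rho> / C"
  have eps0: "eps > 0" unfolding eps_def using rho C by simp
  have small: "w \<in> K0" if "w \<in> V" "norm w < eps" for w
  proof -
    have "norm (T w) \<le> C * norm w" by (rule C(2))
    also have "\<dots> < C * eps" using that(2) C(1) by simp
    also have "\<dots> = \<rho>" unfolding eps_def using C(1) by simp
    finally have "T w \<in> B" using ballB by auto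
    then show ?thesis using f1 that(1) by blast
  qed
  have zero: "0 \<in> K0" using small[of 0] eps0 subspace_0[OF subV] by simp
  have scale: "l *\<^sub>R w \<in> K0" if "w \<in> K0" "0 \<le> l" "l \<le> 1" for w l
    using convex_scale0[OF cvK0 zero that] .
  obtain R0 where R0: "R0 > 0" "\<And>w. w \<in> K0 \<Longrightarrow> norm w \<le> R0"
    using compact_imp_bounded[OF cK0] unfolding bounded_pos by blast
  define SA where "SA = {t::real. t *\<^sub>R m \<in> K0}"
  have "closed SA" unfolding SA_def
    using continuous_closed_vimage[of K0 "\<lambda>t::real. t *\<^sub>R m"] compact_imp_closed[OF cK0]
    by (auto simp: vimage_def continuous_intros)
  moreover have "bounded SA" unfolding bounded_pos SA_def
    using R0 m1 by (intro exI[of _ R0]) force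
  ultimately have "compact SA" using compact_eq_bounded_closed by blast
  moreover have "0 \<in> SA" unfolding SA_def using zero by simp
  then have "SA \<noteq> {}" by blast
  ultimately obtain a where aS: "a \<in> SA" and amax: "\<And>t. t \<in> SA \<Longrightarrow> t \<le> a"
    using compact_attains_sup by metis
  have aK: "a *\<^sub>R m \<in> K0" using aS unfolding SA_def by simp
  have "(eps/2) *\<^sub>R m \<in> K0" using small[of "(eps/2) *\<^sub>R m"] mV eps0 m1 subspace_mul[OF subV] by simp
  then have "eps/2 \<in> SA" unfolding SA_def by simp
  then have "eps/2 \<le> a" using amax by blast
  then have a0: "a > 0" using eps0 by simp
  have Pa: "(a * t) *\<^sub>R m \<in> K0 \<longleftrightarrow> \<bar>t\<bar> \<le> 1" for t
  proof
    assume h: "(a * t) *\<^sub>R m \<in> K0"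
    have "a * t \<le> a" using amax h unfolding SA_def by simp
    moreover have "(- (a * t)) *\<^sub>R m \<in> K0" using neg[OF h] by simp
    then have "- (a * t) \<le> a" using amax unfolding SA_def by simp
    ultimately have "a * t \<le> a * 1" "a * (- t) \<le> a * 1" by simp_all
    then have "t \<le> 1" "- t \<le> 1" using a0 mult_le_cancel_left_pos[of a] by blast+
    then show "\<bar>t\<bar> \<le> 1" by linarith
  next
    assume h: "\<bar>t\<bar> \<le> 1"
    show "(a * t) *\<^sub>R m \<in> K0"
    proof (cases "t \<ge> 0")
      case True
      then have "t *\<^sub>R (a *\<^sub>R m) \<in> K0" using scale[OF aK] h by simp
      then show ?thesis by (simp add: mult.commute)
    next
      case False
      have "0 \<le> - t" "- t \<le> 1" using False h by auto
      from scale[OF neg[OF aK] this] have "(- t) *\<^sub>R (- (a *\<^sub>R m)) \<in> K0" .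
      then show ?thesis by (simp add: mult.commute)
    qed
  qed
  define H0 where "H0 = K0 \<inter> {h. h \<bullet> m = 0}"
  have "compact H0" unfolding H0_def
    using cK0 closed_hyperplane[of m 0] by (auto simp: inner_commute intro!: compact_Int_closed)
  then have "compact (norm ` H0)" by (intro compact_continuous_image continuous_intros)
  moreover have "norm ` H0 \<noteq> {}" using zero unfolding H0_def by auto
  ultimately obtain b where bS: "b \<in> norm ` H0" and bmax: "\<And>t. t \<in> norm ` H0 \<Longrightarrow> t \<le> b"
    using compact_attains_sup by metis
  obtain hs where hs: "hs \<in> K0" "hs \<bullet> m = 0" "norm hs = b" using bS unfolding H0_def by auto
  have bmax': "norm h \<le> b" if "h \<in> K0" "h \<bullet> m = 0" for h using bmax that unfolding H0_def by auto
  define b' where "b' = (if b = 0 then 1 else b)"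
  have b'0: "b' > 0" unfolding b'_def using hs(3) norm_ge_zero[of hs] by auto
  have Pb: "b' *\<^sub>R h \<in> K0 \<longleftrightarrow> norm h \<le> 1" if hV: "h \<in> V" and hm: "h \<bullet> m = 0" for h
  proof (cases "b = 0")
    case True
    have "h = 0"
    proof (rule ccontr)
      assume "h \<noteq> 0"
      define h' where "h' = (eps/2 / norm h) *\<^sub>R h"
      have nh': "norm h' = eps/2" unfolding h'_def using \<open>h \<noteq> 0\<close> eps0 by simp
      have "h' \<in> K0" using small[of h'] nh' eps0 subspace_mul[OF subV hV] unfolding h'_def by simp
      moreover have "h' \<bullet> m = 0" unfolding h'_def using hm by simp
      ultimately have "norm h' \<le> 0" using bmax'[of h'] True by simp
      then show False using nh' eps0 by simp
    qed
    then show ?thesis using zero by simp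
  next
    case False
    then have bb: "b' = b" "b > 0" unfolding b'_def using hs(3) norm_ge_zero[of hs] by auto
    show ?thesis
    proof
      assume "b' *\<^sub>R h \<in> K0"
      moreover have "(b' *\<^sub>R h) \<bullet> m = 0" using hm by simp
      ultimately have "norm (b' *\<^sub>R h) \<le> b" using bmax' by blast
      then show "norm h \<le> 1" using bb by simp
    next
      assume nh: "norm h \<le> 1"
      show "b' *\<^sub>R h \<in> K0"
      proof (cases "h = 0")
        case True then show ?thesis using zero by simp
      next
        case False
        define g where "g = (b / norm h) *\<^sub>R h"
        have gV: "g \<in> V" unfolding g_def using subspace_mul[OF subV hV] .
        have gm: "g \<bullet> m = 0" unfolding g_def using hm by simp
        have ng: "norm g = b" unfolding g_def using False bb by simp
        have hsV: "hs \<in> V" using hs(1) K0V by blast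
        have "g \<in> K0" using inv[OF hsV gV] hs gm ng by simp
        then have "norm h *\<^sub>R g \<in> K0" using scale nh by simp
        moreover have "norm h *\<^sub>R g = b' *\<^sub>R h" unfolding g_def using False bb by simp
        ultimately show ?thesis by simp
      qed
    qed
  qed
  define D where "D y = (a * (y \<bullet> m)) *\<^sub>R m + b' *\<^sub>R (y - (y \<bullet> m) *\<^sub>R m)" for y
  have linD: "linear D" unfolding linear_iff D_def
    by (simp add: inner_add_left algebra_simps scaleR_add_right)
  have DV: "D y \<in> V" if "y \<in> V" for y unfolding D_def
    using that mV subV by (intro subspace_add subspace_mul subspace_diff) auto
  have hV: "y - (y \<bullet> m) *\<^sub>R m \<in> V" if "y \<in> V" for y
    using that mV subV by (intro subspace_diff subspace_mul) auto
  have hm: "(y - (y \<bullet> m) *\<^sub>R m) \<bullet> m = 0" for y by (rule proj_orth[OF m1])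
  have Dm: "D y \<bullet> m = a * (y \<bullet> m)" for y
    unfolding D_def using mm hm[of y] by (simp add: inner_add_left)
  have Dn: "(norm (D y))\<^sup>2 = (a * (y \<bullet> m))\<^sup>2 + b'\<^sup>2 * (norm (y - (y \<bullet> m) *\<^sub>R m))\<^sup>2" for y
    unfolding D_def by (rule pyth_comb[OF m1 hm])
  define N where "N = T \<circ> D"
  have linN: "linear N" unfolding N_def using linD T(1) by (rule linear_compose)
  have NB: "N y \<in> B \<longleftrightarrow> D y \<in> K0" if "y \<in> V" for y
    using f1[OF DV[OF that]] by (simp add: N_def)
  have NV: "N ` V \<subseteq> V" unfolding N_def using DV T(3) by auto
  have S1: "N y \<in> B" if yV: "y \<in> V" and ny: "norm y \<le> 1/2" for y
  proof -
    define t where "t = y \<bullet> m"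
    define h where "h = y - t *\<^sub>R m"
    have bt: "\<bar>t\<bar> \<le> norm y" "norm h \<le> norm y" using proj_bounds[OF m1, of y] by (simp_all add: t_def h_def)
    have p1: "(a * (2*t)) *\<^sub>R m \<in> K0" using Pa bt ny by simp
    have h2V: "2 *\<^sub>R h \<in> V" using hV[OF yV] subspace_mul[OF subV] by (simp add: h_def t_def)
    have h2m: "(2 *\<^sub>R h) \<bullet> m = 0" using hm[of y] by (simp add: h_def t_def)
    have p2: "b' *\<^sub>R (2 *\<^sub>R h) \<in> K0" using Pb[OF h2V h2m] bt ny by simp
    have "D y = (1/2) *\<^sub>R ((a * (2*t)) *\<^sub>R m) + (1/2) *\<^sub>R (b' *\<^sub>R (2 *\<^sub>R h))"
      by (simp add: D_def t_def h_def)
    then have "D y \<in> K0" using convex_mid[OF cvK0 p1 p2] by simp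
    then show ?thesis using NB[OF yV] by simp
  qed
  have S2: "norm y \<le> 2" if yV: "y \<in> V" and NyB: "N y \<in> B" for y
  proof -
    define t where "t = y \<bullet> m"
    define h where "h = y - t *\<^sub>R m"
    have hV': "h \<in> V" using hV[OF yV] by (simp add: h_def t_def)
    have hm': "h \<bullet> m = 0" using hm[of y] by (simp add: h_def t_def)
    define p where "p = (a * t) *\<^sub>R m + b' *\<^sub>R h"
    define q where "q = (a * t) *\<^sub>R m + (- b') *\<^sub>R h"
    have pK: "p \<in> K0" using NB[OF yV] NyB by (simp add: p_def D_def t_def h_def)
    have pV: "p \<in> V" unfolding p_def using hV' mV subV by (intro subspace_add subspace_mul) auto
    have qV: "q \<in> V" unfolding q_def using hV' mV subV by (intro subspace_add subspace_mul) auto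
    have pm: "p \<bullet> m = q \<bullet> m" unfolding p_def q_def using hm' by (simp add: inner_add_left inner_diff_left)
    have "(norm p)\<^sup>2 = (norm q)\<^sup>2" unfolding p_def q_def
      using pyth_comb[OF m1 hm', of "a*t" b'] pyth_comb[OF m1 hm', of "a*t" "- b'"] by simp
    then have pq: "norm p = norm q" by (simp add: power2_eq_iff_nonneg)
    have qK: "q \<in> K0" using inv[OF pV qV pm pq pK] .
    have "(1/2) *\<^sub>R p + (1/2) *\<^sub>R q \<in> K0" using convex_mid[OF cvK0 pK qK] .
    moreover have "(1/2) *\<^sub>R p + (1/2) *\<^sub>R q = (a * t) *\<^sub>R m" unfolding p_def q_def
      by (simp add: algebra_simps) (metis scaleR_add_left field_sum_of_halves)
    ultimately have "\<bar>t\<bar> \<le> 1" using Pa by simp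
    have "(1/2) *\<^sub>R p + (1/2) *\<^sub>R (- q) \<in> K0" using convex_mid[OF cvK0 pK neg[OF qK]] .
    moreover have "(1/2) *\<^sub>R p + (1/2) *\<^sub>R (- q) = b' *\<^sub>R h" unfolding p_def q_def
      by (simp add: algebra_simps) (metis scaleR_add_left field_sum_of_halves)
    ultimately have "norm h \<le> 1" using Pb[OF hV' hm'] by simp
    have "y = t *\<^sub>R m + h" by (simp add: h_def)
    then have "norm y \<le> norm (t *\<^sub>R m) + norm h" by (metis norm_triangle_ineq)
    also have "\<dots> = \<bar>t\<bar> + norm h" using m1 by simp
    finally show ?thesis using \<open>\<bar>t\<bar> \<le> 1\<close> \<open>norm h \<le> 1\<close> by simp
  qed
  have S3: "N z \<in> B" if yV: "y \<in> V" and zV: "z \<in> V" and ym: "y \<bullet> m = z \<bullet> m" and nyz: "norm y = norm z"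
    and NyB: "N y \<in> B" for y z
  proof -
    have DyK: "D y \<in> K0" using NB[OF yV] NyB by simp
    have e1: "D y \<bullet> m = D z \<bullet> m" using Dm ym by simp
    have hh: "norm (z - (z \<bullet> m) *\<^sub>R m) = norm (y - (y \<bullet> m) *\<^sub>R m)"
      using norm_sub_proj_eq[OF m1 ym nyz] ym by simp
    have "(norm (D y))\<^sup>2 = (norm (D z))\<^sup>2" using Dn[of y] Dn[of z] hh ym by simp
    then have e2: "norm (D y) = norm (D z)" by (simp add: power2_eq_iff_nonneg)
    have "D z \<in> K0" using inv[OF DV[OF yV] DV[OF zV] e1 e2 DyK] .
    then show ?thesis using NB[OF zV] by simp
  qed
  have "D m = a *\<^sub>R m" unfolding D_def using mm by simp
  moreover have "a *\<^sub>R m \<in> M" unfolding Mm by (simp add: span_base span_mul)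
  ultimately have NmL: "N m \<in> Li" unfolding LL N_def by simp
  show ?thesis
    apply (rule exI[of _ N], rule exI[of _ m])
    using linN mV m1 NV S1 S2 S3 NmL by blast
qed


lemma span_scale_eq:
  fixes u :: "'a::euclidean_space"
  assumes "k \<noteq> 0"
  shows "span {k *\<^sub>R u} = span {u}"
proof -
  have 1: "{k *\<^sub>R u} \<subseteq> span {u}" by (simp add: span_base span_mul)
  have "u = inverse k *\<^sub>R (k *\<^sub>R u)" using assms by simp
  then have 2: "{u} \<subseteq> span {k *\<^sub>R u}" by (metis empty_subsetI insert_subset span_base span_mul singletonI)
  show ?thesis using 1 2 span_eq by blast
qed

lemma is_line_span:
  fixes m :: "'a::euclidean_space"
  assumes "m \<noteq> 0"
  shows "is_line (span {m})"
  unfolding is_line_def using assms by (simp add: dim_insert span_empty)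

lemma sections_from_invariance:
  fixes K0 V :: "'a::euclidean_space set"
  assumes subV: "subspace V" and mV: "m \<in> V" and m1: "norm m = 1" and K0V: "K0 \<subseteq> V"
    and cK0: "compact K0" and cvK0: "convex K0"
    and inv: "\<And>y z. y \<in> V \<Longrightarrow> z \<in> V \<Longrightarrow> y \<bullet> m = z \<bullet> m \<Longrightarrow> norm y = norm z \<Longrightarrow> y \<in> K0 \<Longrightarrow> z \<in> K0"
    and cM: "c \<in> span {m}"
  shows "let A = {y \<in> V. \<forall>w\<in>span {m}. (y - c) \<bullet> w = 0} in
        K0 \<inter> A = {} \<or> (\<exists>r\<ge>0. K0 \<inter> A = cball c r \<inter> A)"
proof -
  have mm: "m \<bullet> m = 1" using m1 by (simp add: norm_eq_1)
  define s where "s = c \<bullet> m"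
  have cs: "c = s *\<^sub>R m" using in_span_unit[OF m1 cM] by (simp add: s_def)
  have cV: "c \<in> V" using cs subspace_mul[OF subV mV] by simp
  define A where "A = {y \<in> V. \<forall>w\<in>span {m}. (y - c) \<bullet> w = 0}"
  have A_eq: "A = {y \<in> V. y \<bullet> m = s}"
  proof -
    have "(\<forall>w\<in>span {m}. (y - c) \<bullet> w = 0) \<longleftrightarrow> y \<bullet> m = s" for y
    proof
      assume "\<forall>w\<in>span {m}. (y - c) \<bullet> w = 0"
      then have "(y - c) \<bullet> m = 0" by (simp add: span_base)
      then show "y \<bullet> m = s" using cs mm by (simp add: inner_diff_left)
    next
      assume h: "y \<bullet> m = s"
      show "\<forall>w\<in>span {m}. (y - c) \<bullet> w = 0"
      proof
        fix w assume "w \<in> span {m}"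
        then obtain k where "w = k *\<^sub>R m" by (auto simp: span_singleton)
        then show "(y - c) \<bullet> w = 0" using h cs mm by (simp add: inner_diff_left)
      qed
    qed
    then show ?thesis unfolding A_def by auto
  qed
  have "K0 \<inter> A = {} \<or> (\<exists>r\<ge>0. K0 \<inter> A = cball c r \<inter> A)"
  proof (cases "K0 \<inter> A = {}")
    case True then show ?thesis by simp
  next
    case False
    have "closed A" unfolding A_eq
      using closed_subspace[OF subV] closed_hyperplane[of m s]
      by (simp add: Collect_conj_eq closed_Int inner_commute)
    then have "compact (K0 \<inter> A)" using cK0 by (simp add: compact_Int_closed)
    then have "compact (dist c ` (K0 \<inter> A))" by (intro compact_continuous_image continuous_intros)
    moreover have "dist c ` (K0 \<inter> A) \<noteq> {}" using False by simp
    ultimately obtain r where rS: "r \<in> dist c ` (K0 \<inter> A)" and rmax: "\<And>t. t \<in> dist c ` (K0 \<inter> A) \<Longrightarrow> t \<le> r"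
      using compact_attains_sup by metis
    obtain ys where ys: "ys \<in> K0" "ys \<in> A" "dist c ys = r" using rS by auto
    have r0: "r \<ge> 0" using ys(3) by auto
    have "K0 \<inter> A = cball c r \<inter> A"
    proof
      show "K0 \<inter> A \<subseteq> cball c r \<inter> A" using rmax by auto
    next
      show "cball c r \<inter> A \<subseteq> K0 \<inter> A"
      proof
        fix z assume zz: "z \<in> cball c r \<inter> A"
        then have zA: "z \<in> A" and dz: "dist c z \<le> r" by auto
        have zV: "z \<in> V" and zm: "z \<bullet> m = s" using zA unfolding A_eq by auto
        have ysV: "ys \<in> V" and ysm: "ys \<bullet> m = s" using ys(2) unfolding A_eq by auto
        define v where "v = ys - c"
        have vm: "v \<bullet> m = 0" unfolding v_def using ysm cs mm by (simp add: inner_diff_left)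
        have nv: "norm v = r" unfolding v_def using ys(3) by (simp add: dist_norm norm_minus_commute)
        have ys_eq: "ys = s *\<^sub>R m + 1 *\<^sub>R v" unfolding v_def using cs by simp
        define ys' where "ys' = s *\<^sub>R m + (-1) *\<^sub>R v"
        have ys'V: "ys' \<in> V" unfolding ys'_def v_def using cs mV ysV cV subV
          by (intro subspace_add subspace_mul subspace_diff) auto
        have ys'm: "ys' \<bullet> m = s" unfolding ys'_def using vm mm by (simp add: inner_diff_left)
        have "(norm ys)\<^sup>2 = (norm ys')\<^sup>2" unfolding ys'_def
          by (subst ys_eq, simp only: pyth_comb[OF m1 vm]) simp
        then have "norm ys = norm ys'" by (simp add: power2_eq_iff_nonneg)
        then have ys'K: "ys' \<in> K0" using inv[OF ysV ys'V] ysm ys'm ys(1) by simp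
        define w where "w = z - c"
        have wm: "w \<bullet> m = 0" unfolding w_def using zm cs mm by (simp add: inner_diff_left)
        have nw: "norm w = dist c z" unfolding w_def by (simp add: dist_norm norm_minus_commute)
        show "z \<in> K0 \<inter> A"
        proof (cases "r = 0")
          case True
          then have "z = c" using dz by simp
          moreover have "ys = c" using True ys(3) by simp
          ultimately show ?thesis using ys zA by simp
        next
          case False
          then have rpos: "r > 0" using r0 by simp
          define l where "l = dist c z / r"
          have l0: "0 \<le> l" "l \<le> 1" unfolding l_def using dz rpos by auto
          define p where "p = s *\<^sub>R m + l *\<^sub>R v"
          have "((1 + l)/2) *\<^sub>R ys + ((1 - l)/2) *\<^sub>R ys' \<in> K0"
            using convexD[OF cvK0 ys(1) ys'K, of "(1 + l)/2" "(1 - l)/2"] l0 by (simp add: add_divide_distrib[symmetric])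
          moreover have "((1 + l)/2) *\<^sub>R ys + ((1 - l)/2) *\<^sub>R ys' = p"
          proof -
            have "((1 + l)/2) *\<^sub>R ys + ((1 - l)/2) *\<^sub>R ys' =
               (((1+l)/2 + (1-l)/2) * s) *\<^sub>R m + ((1+l)/2 - (1-l)/2) *\<^sub>R v"
              unfolding ys'_def by (subst ys_eq) (simp add: algebra_simps)
            also have "((1+l)/2 + (1-l)/2) = (1::real)" by (simp add: field_simps)
            also have "((1+l)/2 - (1-l)/2) = l" by (simp add: field_simps)
            finally show ?thesis unfolding p_def by simp
          qed
          ultimately have pK: "p \<in> K0" by simp
          have pV: "p \<in> V" unfolding p_def v_def using cs mV ysV cV subV
            by (intro subspace_add subspace_mul subspace_diff) auto
          have pm: "p \<bullet> m = z \<bullet> m" unfolding p_def using vm mm zm by (simp add: inner_add_left)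
          have z_eq: "z = s *\<^sub>R m + 1 *\<^sub>R w" unfolding w_def using cs by simp
          have "(norm p)\<^sup>2 = s\<^sup>2 + l\<^sup>2 * r\<^sup>2" unfolding p_def using pyth_comb[OF m1 vm] nv by simp
          also have "\<dots> = s\<^sup>2 + (dist c z)\<^sup>2" unfolding l_def using rpos by (simp add: power_divide)
          also have "\<dots> = (norm z)\<^sup>2" by (subst z_eq, simp only: pyth_comb[OF m1 wm] nw) simp
          finally have "norm p = norm z" by (simp add: power2_eq_iff_nonneg)
          then have "z \<in> K0" using inv[OF pV zV pm] pK by simp
          then show ?thesis using zA by simp
        qed
      qed
    qed
    then show ?thesis using r0 by blast
  qed
  then show ?thesis unfolding A_def Let_def by simp
qed



lemma unit_dist_sq:
  fixes v u :: "'a::euclidean_space"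
  assumes "norm v = 1" "norm u = 1"
  shows "(dist v u)\<^sup>2 = 2 - 2 * (v \<bullet> u)" "(dist v (-u))\<^sup>2 = 2 + 2 * (v \<bullet> u)"
proof -
  have vv: "v \<bullet> v = 1" and uu: "u \<bullet> u = 1" using assms by (simp_all add: norm_eq_1)
  show "(dist v u)\<^sup>2 = 2 - 2 * (v \<bullet> u)" unfolding dist_norm power2_norm_eq_inner
    using vv uu by (simp add: inner_diff_left inner_diff_right inner_commute)
  show "(dist v (-u))\<^sup>2 = 2 + 2 * (v \<bullet> u)" unfolding dist_norm power2_norm_eq_inner
    using vv uu by (simp add: inner_add_left inner_add_right inner_commute)
qed

lemma dist_neg_swap:
  fixes a b :: "'a::real_normed_vector"
  shows "dist (- a) b = dist a (- b)"
proof -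
  have "- a - b = - (a - - b)" by simp
  then show ?thesis unfolding dist_norm by (metis norm_minus_cancel)
qed

lemma RP_conv:
  fixes Ls :: "nat \<Rightarrow> 'a::euclidean_space set"
  assumes Lsi: "\<And>i. Ls i \<in> RP_lines" and LRP: "L \<in> RP_lines" and lim: "limitin RP_topology Ls L sequentially"
  obtains u us where "norm u = 1" "L = span {u}" "\<And>i. norm (us i) = 1" "\<And>i. Ls i = span {us i}" "us \<longlonglongrightarrow> u"
proof -
  obtain u where u1: "norm u = 1" and Lu: "L = span {u}" using LRP unfolding RP_lines_def by auto
  have "\<forall>i. \<exists>v. norm v = 1 \<and> Ls i = span {v}" using Lsi unfolding RP_lines_def by auto
  then obtain v where v1: "\<And>i. norm (v i) = 1" and Lv: "\<And>i. Ls i = span {v i}" by metis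
  define us where "us i = (if v i \<bullet> u \<ge> 0 then v i else - v i)" for i
  have us1: "norm (us i) = 1" for i unfolding us_def using v1 by simp
  have Lus: "Ls i = span {us i}" for i
  proof -
    have "span {- v i} = span {v i}" using span_scale_eq[of "-1" "v i"] by simp
    then show ?thesis unfolding us_def using Lv by simp
  qed
  have "us \<longlonglongrightarrow> u"
  proof (rule tendstoI)
    fix e :: real assume e0: "e > 0"
    define eps where "eps = min e 1"
    have eps0: "eps > 0" "eps \<le> 1" "eps \<le> e" unfolding eps_def using e0 by auto
    define U where "U = {span {w} | w. w \<in> sphere (0::'a) 1 \<and> (dist w u < eps \<or> dist w (-u) < eps)}"
    have pre: "{w \<in> sphere 0 1. span {w} \<in> U} = sphere 0 1 \<inter> (ball u eps \<union> ball (-u) eps)"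
    proof (intro equalityI subsetI)
      fix w assume "w \<in> {w \<in> sphere (0::'a) 1. span {w} \<in> U}"
      then have w: "w \<in> sphere (0::'a) 1" "span {w} \<in> U" by auto
      then obtain w' where w': "w' \<in> sphere 0 1" "dist w' u < eps \<or> dist w' (-u) < eps" "span {w} = span {w'}"
        unfolding U_def by auto
      have "w = w' \<or> w = - w'" using unit_span_eq[OF _ _ w'(3)] w(1) w'(1) by simp
      moreover have "dist (- w') u = dist w' (-u)" "dist (- w') (-u) = dist w' u"
        using dist_neg_swap[of w' u] dist_neg_swap[of w' "-u"] by simp_all
      ultimately show "w \<in> sphere 0 1 \<inter> (ball u eps \<union> ball (-u) eps)" using w'(2) w(1) by (auto simp: dist_commute)
    next
      fix w assume "w \<in> sphere (0::'a) 1 \<inter> (ball u eps \<union> ball (-u) eps)"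
      then show "w \<in> {w \<in> sphere (0::'a) 1. span {w} \<in> U}" unfolding U_def by (auto simp: dist_commute)
    qed
    have "openin RP_topology U"
      unfolding openin_RP_topology
    proof
      show "U \<subseteq> RP_lines" unfolding U_def RP_lines_def by auto
      show "openin (top_of_set (sphere 0 1)) {u \<in> sphere 0 1. span {u} \<in> U}"
        unfolding pre by (intro openin_open_Int open_Un open_ball)
    qed
    moreover have "L \<in> U" unfolding U_def Lu using u1 eps0 by auto
    ultimately have ev: "eventually (\<lambda>i. Ls i \<in> U) sequentially" using limitinD[OF lim] by blast
    show "eventually (\<lambda>i. dist (us i) u < e) sequentially"
    proof (rule eventually_mono[OF ev])
      fix i assume "Ls i \<in> U"
      then obtain w where w: "w \<in> sphere 0 1" "dist w u < eps \<or> dist w (-u) < eps" "Ls i = span {w}"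
        unfolding U_def by auto
      have "v i = w \<or> v i = - w" using unit_span_eq[of "v i" w] v1 w Lv by simp
      moreover have "dist (- w) u = dist w (-u)" "dist (- w) (-u) = dist w u"
        using dist_neg_swap[of w u] dist_neg_swap[of w "-u"] by simp_all
      ultimately have cl: "dist (v i) u < eps \<or> dist (v i) (-u) < eps" using w(2) by auto
      have ds: "(dist (v i) u)\<^sup>2 = 2 - 2 * (v i \<bullet> u)" "(dist (v i) (-u))\<^sup>2 = 2 + 2 * (v i \<bullet> u)"
        using unit_dist_sq[OF v1 u1] by auto
      show "dist (us i) u < e"
      proof (cases "dist (v i) u < eps")
        case True
        then have "dist (v i) u < 1" using eps0 by linarith
        then have "(dist (v i) u)\<^sup>2 < 1\<^sup>2" by (intro power_strict_mono) auto
        then have "v i \<bullet> u \<ge> 0" using ds by simp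
        then show ?thesis unfolding us_def using True eps0 by simp
      next
        case False
        then have d2: "dist (v i) (-u) < eps" using cl by simp
        then have "dist (v i) (-u) < 1" using eps0 by linarith
        then have "(dist (v i) (-u))\<^sup>2 < 1\<^sup>2" by (intro power_strict_mono) auto
        then have "\<not> v i \<bullet> u \<ge> 0" using ds by simp
        moreover have "dist (- v i) u = dist (v i) (-u)" by (rule dist_neg_swap)
        ultimately show ?thesis unfolding us_def using d2 eps0 by simp
      qed
    qed
  qed
  then show ?thesis using that u1 Lu us1 Lus by blast
qed



lemma limit_part:
  fixes B :: "'a::euclidean_space set" and xs ms us :: "nat \<Rightarrow> 'a"
    and F :: "nat \<Rightarrow> 'a \<Rightarrow>\<^sub>L 'a" and Ls :: "nat \<Rightarrow> 'a set"
  assumes clB: "closed B" and cvB: "convex B" and intB: "0 \<in> interior B" and symB: "uminus ` B = B"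
    and xs1: "\<And>j. norm (xs j) = 1" and xsx: "xs \<longlonglongrightarrow> x"
    and FF: "F \<longlonglongrightarrow> Fi" and msm: "ms \<longlonglongrightarrow> m"
    and msV: "\<And>j. xs j \<bullet> ms j = 0" and ms1: "\<And>j. norm (ms j) = 1"
    and FV: "\<And>j y. xs j \<bullet> blinfun_apply (F j) y = 0"
    and S1: "\<And>j y. xs j \<bullet> y = 0 \<Longrightarrow> norm y \<le> 1/2 \<Longrightarrow> blinfun_apply (F j) y \<in> B"
    and S2: "\<And>j y. xs j \<bullet> y = 0 \<Longrightarrow> blinfun_apply (F j) y \<in> B \<Longrightarrow> norm y \<le> 2"
    and S3: "\<And>j y z. xs j \<bullet> y = 0 \<Longrightarrow> xs j \<bullet> z = 0 \<Longrightarrow> y \<bullet> ms j = z \<bullet> ms j \<Longrightarrow> norm y = norm z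
               \<Longrightarrow> blinfun_apply (F j) y \<in> B \<Longrightarrow> blinfun_apply (F j) z \<in> B"
    and Lj: "\<And>j. blinfun_apply (F j) (ms j) \<in> Ls j"
    and usu: "us \<longlonglongrightarrow> u" and Lus: "\<And>j. Ls j = span {us j}" and us1: "\<And>j. norm (us j) = 1"
    and Lu: "L = span {u}"
  shows "affine_sym_body_of_revolution_in {y. x \<bullet> y = 0} ({y. x \<bullet> y = 0} \<inter> B) L"
proof -
  define V where "V = {y. x \<bullet> y = 0}"
  define Nf where "Nf = blinfun_apply Fi"
  have blN: "bounded_linear Nf" unfolding Nf_def by (rule blinfun.bounded_linear_right)
  have linN: "linear Nf" using blN by (rule bounded_linear.linear)
  have subV: "subspace V" unfolding V_def by (rule subspace_hyperplane)
  have joint: "(\<lambda>j. blinfun_apply (F j) (g j)) \<longlonglongrightarrow> Nf g0" if "g \<longlonglongrightarrow> g0" for g g0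
    unfolding Nf_def using bounded_bilinear.tendsto[OF bounded_bilinear_blinfun_apply FF that] .
  define P where "P j y = y - (xs j \<bullet> y) *\<^sub>R xs j" for j y
  have xx: "xs j \<bullet> xs j = 1" for j using xs1[of j] by (simp add: norm_eq_1)
  have PV: "xs j \<bullet> P j y = 0" for j y unfolding P_def using xx[of j] by (simp add: inner_diff_right)
  have Pn: "norm (P j y) \<le> norm y" for j y
    using proj_bounds(2)[OF xs1[of j], of y] unfolding P_def by (simp add: inner_commute)
  have Plim: "(\<lambda>j. P j y) \<longlonglongrightarrow> y" if "y \<in> V" for y
  proof -
    have "(\<lambda>j. P j y) \<longlonglongrightarrow> y - (x \<bullet> y) *\<^sub>R x" unfolding P_def using xsx by (intro tendsto_intros)
    then show ?thesis using that unfolding V_def by simp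
  qed
  have zeroB: "0 \<in> B" using intB interior_subset by blast
  have shrink: "(1 - e) *\<^sub>R w \<in> interior B" if "w \<in> B" "0 < e" "e \<le> 1" for w e
    using mem_interior_convex_shrink[OF cvB intB that] by (simp add: algebra_simps)
  have negB: "- w \<in> B" if "w \<in> B" for w using symB that by force
  have m1: "norm m = 1"
  proof -
    have "(\<lambda>j. norm (ms j)) \<longlonglongrightarrow> norm m" using msm by (rule tendsto_norm)
    then have "(\<lambda>j. 1::real) \<longlonglongrightarrow> norm m" using ms1 by simp
    from LIMSEQ_unique[OF tendsto_const this] show ?thesis by simp
  qed
  have mV: "m \<in> V"
  proof -
    have "(\<lambda>j. xs j \<bullet> ms j) \<longlonglongrightarrow> x \<bullet> m" using xsx msm by (rule tendsto_inner)
    then have "(\<lambda>j. 0::real) \<longlonglongrightarrow> x \<bullet> m" using msV by simp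
    from LIMSEQ_unique[OF tendsto_const this] show ?thesis unfolding V_def by simp
  qed
  have NV: "Nf y \<in> V" for y
  proof -
    have "(\<lambda>j. xs j \<bullet> blinfun_apply (F j) y) \<longlonglongrightarrow> x \<bullet> Nf y" using xsx joint[OF tendsto_const] by (rule tendsto_inner)
    then have "(\<lambda>j. 0::real) \<longlonglongrightarrow> x \<bullet> Nf y" using FV by simp
    from LIMSEQ_unique[OF tendsto_const this] show ?thesis unfolding V_def by simp
  qed
  have E: "Nf y \<in> B" if yV: "y \<in> V" and ny: "norm y \<le> 1/2" for y
  proof (rule closed_sequentially[OF clB])
    show "blinfun_apply (F j) (P j y) \<in> B" for j using S1[OF PV] Pn[of j y] ny by simp
    show "(\<lambda>j. blinfun_apply (F j) (P j y)) \<longlonglongrightarrow> Nf y" using joint[OF Plim[OF yV]] .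
  qed
  have Fb: "norm y \<le> 2" if yV: "y \<in> V" and NyB: "Nf y \<in> B" for y
  proof -
    have sc: "(1 - e) * norm y \<le> 2" if e: "0 < e" "e \<le> 1" for e
    proof -
      have y'V: "(1 - e) *\<^sub>R y \<in> V" using subspace_mul[OF subV yV] .
      have "Nf ((1 - e) *\<^sub>R y) = (1 - e) *\<^sub>R Nf y" using linN by (simp add: linear_scale)
      then have wint: "Nf ((1 - e) *\<^sub>R y) \<in> interior B" using shrink[OF NyB e] by simp
      have "eventually (\<lambda>j. blinfun_apply (F j) (P j ((1 - e) *\<^sub>R y)) \<in> interior B) sequentially"
        using topological_tendstoD[OF joint[OF Plim[OF y'V]] open_interior wint] .
      then have ev: "eventually (\<lambda>j. norm (P j ((1 - e) *\<^sub>R y)) \<le> 2) sequentially"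
        by (rule eventually_mono) (use S2 PV interior_subset in blast)
      have "(\<lambda>j. norm (P j ((1 - e) *\<^sub>R y))) \<longlonglongrightarrow> norm ((1 - e) *\<^sub>R y)"
        using Plim[OF y'V] by (rule tendsto_norm)
      then have "norm ((1 - e) *\<^sub>R y) \<le> 2" using ev by (intro tendsto_upperbound) auto
      then show ?thesis using e by simp
    qed
    show ?thesis
    proof (rule ccontr)
      assume "\<not> norm y \<le> 2"
      then have ny: "norm y > 2" by simp
      define e where "e = (norm y - 2) / (2 * norm y)"
      have e0a: "0 < e" unfolding e_def using ny by (auto intro!: divide_pos_pos)
      have "norm y - 2 \<le> 1 * (2 * norm y)" using ny by simp
      then have e0b: "e \<le> 1" unfolding e_def using ny by (subst pos_divide_le_eq) auto
      note e0 = e0a e0b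
      have nz: "norm y \<noteq> 0" using ny by linarith
      have en: "e * norm y = (norm y - 2) / 2" unfolding e_def using nz by (simp add: field_simps)
      have "(1 - e) * norm y = norm y - e * norm y" by (simp add: left_diff_distrib)
      then have "(1 - e) * norm y = norm y - (norm y - 2) / 2" using en by simp
      then show False using sc[OF e0] ny by (simp add: field_simps)
    qed
  qed
  have mm: "m \<bullet> m = 1" using m1 by (simp add: norm_eq_1)
  have G: "Nf z \<in> B" if yV: "y \<in> V" and zV: "z \<in> V" and ym: "y \<bullet> m = z \<bullet> m" and nyz: "norm y = norm z"
    and NyB: "Nf y \<in> B" for y z
  proof (cases "z - (z \<bullet> m) *\<^sub>R m = 0")
    case True
    have "norm (z - (y \<bullet> m) *\<^sub>R m) = norm (y - (y \<bullet> m) *\<^sub>R m)" by (rule norm_sub_proj_eq[OF m1 ym nyz])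
    then have "y - (y \<bullet> m) *\<^sub>R m = 0" using True ym by simp
    then have "y = z" using True ym by (metis eq_iff_diff_eq_0)
    then show ?thesis using NyB by simp
  next
    case False
    have shr: "(1 - e) *\<^sub>R Nf z \<in> B" if e: "0 < e" "e \<le> 1" for e
    proof (cases "e = 1")
      case True then show ?thesis using zeroB by simp
    next
      case False
      then have e1: "e < 1" using e by simp
      define y' where "y' = (1 - e) *\<^sub>R y"
      define z' where "z' = (1 - e) *\<^sub>R z"
      have y'V: "y' \<in> V" unfolding y'_def using subspace_mul[OF subV yV] .
      have z'V: "z' \<in> V" unfolding z'_def using subspace_mul[OF subV zV] .
      have y'm: "y' \<bullet> m = z' \<bullet> m" unfolding y'_def z'_def using ym by simp
      have ny': "norm y' = norm z'" unfolding y'_def z'_def using nyz by simp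
      define hz where "hz = z' - (z' \<bullet> m) *\<^sub>R m"
      have "hz = (1 - e) *\<^sub>R (z - (z \<bullet> m) *\<^sub>R m)" unfolding hz_def z'_def by (simp add: algebra_simps)
      then have hz0: "hz \<noteq> 0" using \<open>z - (z \<bullet> m) *\<^sub>R m \<noteq> 0\<close> e1 by simp
      have "Nf y' = (1 - e) *\<^sub>R Nf y" unfolding y'_def using linN by (simp add: linear_scale)
      then have Ny'int: "Nf y' \<in> interior B" using shrink[OF NyB e] by simp
      define yj where "yj j = P j y'" for j
      define tj where "tj j = yj j \<bullet> ms j" for j
      define aj where "aj j = norm (yj j - tj j *\<^sub>R ms j)" for j
      define wj where "wj j = P j z'" for j
      define hj where "hj j = wj j - (wj j \<bullet> ms j) *\<^sub>R ms j" for j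
      define zj where "zj j = tj j *\<^sub>R ms j + (aj j / norm (hj j)) *\<^sub>R hj j" for j
      have yjl: "yj \<longlonglongrightarrow> y'" unfolding yj_def using Plim[OF y'V] .
      have wjl: "wj \<longlonglongrightarrow> z'" unfolding wj_def using Plim[OF z'V] .
      have tjl: "tj \<longlonglongrightarrow> y' \<bullet> m" unfolding tj_def using yjl msm by (rule tendsto_inner)
      have ajl: "aj \<longlonglongrightarrow> norm (y' - (y' \<bullet> m) *\<^sub>R m)" unfolding aj_def
        using yjl tjl msm by (intro tendsto_intros)
      have hjl: "hj \<longlonglongrightarrow> hz" unfolding hj_def hz_def using wjl msm by (intro tendsto_intros)
      have nhjl: "(\<lambda>j. norm (hj j)) \<longlonglongrightarrow> norm hz" using hjl by (rule tendsto_norm)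
      have "zj \<longlonglongrightarrow> (y' \<bullet> m) *\<^sub>R m + (norm (y' - (y' \<bullet> m) *\<^sub>R m) / norm hz) *\<^sub>R hz"
        unfolding zj_def using tjl msm ajl nhjl hjl hz0 by (intro tendsto_intros) auto
      moreover have "norm (y' - (y' \<bullet> m) *\<^sub>R m) = norm hz"
        using norm_sub_proj_eq[OF m1 y'm ny'] y'm unfolding hz_def by simp
      ultimately have zjl: "zj \<longlonglongrightarrow> z'" using hz0 y'm unfolding hz_def by simp
      have ev1: "eventually (\<lambda>j. blinfun_apply (F j) (yj j) \<in> B) sequentially"
        using topological_tendstoD[OF joint[OF yjl] open_interior Ny'int]
        by (rule eventually_mono) (use interior_subset in blast)
      have ev2: "eventually (\<lambda>j. norm (hj j) > 0) sequentially"
        using order_tendstoD(1)[OF nhjl, of 0] hz0 by simp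
      have ev3: "eventually (\<lambda>j. blinfun_apply (F j) (zj j) \<in> B) sequentially"
        using ev1 ev2
      proof eventually_elim
        case (elim j)
        have yjV: "xs j \<bullet> yj j = 0" unfolding yj_def by (rule PV)
        have hjm: "hj j \<bullet> ms j = 0" unfolding hj_def by (rule proj_orth[OF ms1])
        have hjV: "xs j \<bullet> hj j = 0" unfolding hj_def wj_def using PV[of j z'] msV[of j]
          by (simp add: inner_diff_right)
        have zjV: "xs j \<bullet> zj j = 0" unfolding zj_def using hjV msV[of j] by (simp add: inner_add_right)
        have msms: "ms j \<bullet> ms j = 1" using ms1[of j] by (simp add: norm_eq_1)
        have zjm: "yj j \<bullet> ms j = zj j \<bullet> ms j" unfolding zj_def tj_def using hjm msms
          by (simp add: inner_add_left)
        have "(norm (zj j))\<^sup>2 = (tj j)\<^sup>2 + (aj j / norm (hj j))\<^sup>2 * (norm (hj j))\<^sup>2"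
          unfolding zj_def by (rule pyth_comb[OF ms1 hjm])
        also have "\<dots> = (tj j)\<^sup>2 + (aj j)\<^sup>2" using elim(2) by (simp add: power_divide)
        also have "\<dots> = (norm (yj j))\<^sup>2" unfolding tj_def aj_def by (rule proj_norm_sq[OF ms1, symmetric])
        finally have "norm (yj j) = norm (zj j)" by (simp add: power2_eq_iff_nonneg)
        then show ?case using S3[OF yjV zjV zjm _ elim(1)] by simp
      qed
      have "Nf z' \<in> B" using Lim_in_closed_set[OF clB ev3 _ joint[OF zjl]] by simp
      moreover have "Nf z' = (1 - e) *\<^sub>R Nf z" unfolding z'_def using linN by (simp add: linear_scale)
      ultimately show ?thesis by simp
    qed
    define en where "en n = inverse (real (Suc n))" for n
    have "(\<lambda>n. (1 - en n) *\<^sub>R Nf z) \<longlonglongrightarrow> (1 - 0) *\<^sub>R Nf z"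
      unfolding en_def by (intro tendsto_intros LIMSEQ_inverse_real_of_nat)
    then have lim: "(\<lambda>n. (1 - en n) *\<^sub>R Nf z) \<longlonglongrightarrow> Nf z" by simp
    show ?thesis
    proof (rule closed_sequentially[OF clB _ lim])
      fix n
      have "0 < en n" "en n \<le> 1" unfolding en_def by (auto simp: field_simps)
      then show "(1 - en n) *\<^sub>R Nf z \<in> B" using shr by blast
    qed
  qed
  have H: "Nf m = (Nf m \<bullet> u) *\<^sub>R u"
  proof -
    have eq: "(\<lambda>j. blinfun_apply (F j) (ms j)) = (\<lambda>j. (blinfun_apply (F j) (ms j) \<bullet> us j) *\<^sub>R us j)"
      using in_span_unit[OF us1] Lj Lus by (metis)
    have l1: "(\<lambda>j. blinfun_apply (F j) (ms j)) \<longlonglongrightarrow> Nf m" using joint[OF msm] .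
    then have "(\<lambda>j. (blinfun_apply (F j) (ms j) \<bullet> us j) *\<^sub>R us j) \<longlonglongrightarrow> (Nf m \<bullet> u) *\<^sub>R u"
      using usu by (intro tendsto_intros)
    then have "(\<lambda>j. blinfun_apply (F j) (ms j)) \<longlonglongrightarrow> (Nf m \<bullet> u) *\<^sub>R u" using eq by simp
    from LIMSEQ_unique[OF l1 this] show ?thesis .
  qed
  have inj0: "y = 0" if yV: "y \<in> V" and Ny: "Nf y = 0" for y
  proof (rule ccontr)
    assume y0: "y \<noteq> 0"
    define k where "k = 3 / norm y"
    have kyV: "k *\<^sub>R y \<in> V" using subspace_mul[OF subV yV] .
    have "Nf (k *\<^sub>R y) = 0" using Ny linN by (simp add: linear_scale)
    then have "norm (k *\<^sub>R y) \<le> 2" using Fb[OF kyV] zeroB by simp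
    moreover have "norm (k *\<^sub>R y) = 3" unfolding k_def using y0 by simp
    ultimately show False by simp
  qed
  have injN: "inj_on Nf V" using linear_inj_on_iff_eq_0[OF linN subV] inj0 by blast
  have NVV: "Nf ` V \<subseteq> V" using NV by blast
  have spV: "span V = V" using subV by simp
  have "inj_on Nf (span V)" unfolding spV by (rule injN)
  then have dimeq: "dim (Nf ` V) = dim V" using dim_image_eq[OF linN] by blast
  have "span (Nf ` V) = span V" using dim_eq_span[OF NVV] dimeq by simp
  moreover have "span (Nf ` V) = Nf ` V" using linear_subspace_image[OF linN subV] by simp
  ultimately have surj: "Nf ` V = V" using spV by simp
  define K0 where "K0 = {y \<in> V. Nf y \<in> B}"
  define M where "M = span {m}"
  have m0: "m \<noteq> 0" using m1 by auto
  have K0V: "K0 \<subseteq> V" unfolding K0_def by auto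
  have KK: "V \<inter> B = Nf ` K0"
  proof
    show "V \<inter> B \<subseteq> Nf ` K0"
    proof
      fix w assume w: "w \<in> V \<inter> B"
      then obtain y where "y \<in> V" "w = Nf y" using surj by blast
      then show "w \<in> Nf ` K0" using w unfolding K0_def by blast
    qed
    show "Nf ` K0 \<subseteq> V \<inter> B" unfolding K0_def using NV by auto
  qed
  have LM: "L = Nf ` M"
  proof -
    have "Nf ` M = span {Nf m}" unfolding M_def using span_linear_image[OF linN, of "{m}"] by simp
    moreover have "Nf m \<noteq> 0" using inj0[OF mV] m0 by blast
    then have "Nf m \<bullet> u \<noteq> 0" using H by (metis scaleR_zero_left)
    then have "span {Nf m} = span {u}" using span_scale_eq[of "Nf m \<bullet> u" u] H by simp
    ultimately show ?thesis using Lu by simp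
  qed
  have bK0: "bounded K0" unfolding bounded_pos K0_def using Fb by (intro exI[of _ 2]) auto
  have "K0 = V \<inter> Nf -` B" unfolding K0_def by auto
  moreover have "closed (Nf -` B)"
    using continuous_closed_vimage[OF clB] linear_continuous_at[OF blN] by blast
  ultimately have clK0: "closed K0" using closed_subspace[OF subV] by (simp add: closed_Int)
  have cK0: "compact K0" using bK0 clK0 compact_eq_bounded_closed by blast
  have cvK0: "convex K0"
  proof -
    have "convex (Nf -` B)" using convex_linear_vimage[OF linN cvB] by (simp add: vimage_def)
    then have "convex (V \<inter> Nf -` B)" using subspace_imp_convex[OF subV] by (simp add: convex_Int)
    moreover have "K0 = V \<inter> Nf -` B" unfolding K0_def by auto
    ultimately show ?thesis by simp
  qed
  have affK0: "aff_dim K0 = int (dim V)"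
  proof (rule antisym)
    show "aff_dim K0 \<le> int (dim V)" using aff_dim_subset[OF K0V] aff_dim_subspace[OF subV] by simp
    have sub: "V \<inter> ball 0 (1/2) \<subseteq> K0" unfolding K0_def using E by auto
    have "aff_dim (V \<inter> ball 0 (1/2)) = aff_dim V"
    proof (rule aff_dim_convex_Int_open[OF subspace_imp_convex[OF subV] open_ball])
      have "(0::'a) \<in> V \<inter> ball 0 (1/2)" using subspace_0[OF subV] by simp
      then show "V \<inter> ball 0 (1/2) \<noteq> {}" by blast
    qed
    then show "int (dim V) \<le> aff_dim K0" using aff_dim_subset[OF sub] aff_dim_subspace[OF subV] by simp
  qed
  have negK0: "- y \<in> K0" if "y \<in> K0" for y
  proof -
    have "Nf (- y) = - Nf y" using linN by (simp add: linear_neg)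
    then show ?thesis using that negB subspace_neg[OF subV] unfolding K0_def by auto
  qed
  have symK0: "uminus ` K0 = K0"
  proof
    show "uminus ` K0 \<subseteq> K0" using negK0 by auto
    show "K0 \<subseteq> uminus ` K0"
    proof
      fix y assume "y \<in> K0"
      then have "- y \<in> K0" by (rule negK0)
      then show "y \<in> uminus ` K0" by (metis image_eqI minus_minus)
    qed
  qed
  have scb: "sym_convex_body_in V K0"
    unfolding sym_convex_body_in_def using subV K0V cK0 cvK0 affK0 symK0 by blast
  have invK0: "z \<in> K0" if "y \<in> V" "z \<in> V" "y \<bullet> m = z \<bullet> m" "norm y = norm z" "y \<in> K0" for y z
    using G[OF that(1-4)] that unfolding K0_def by auto
  have lineM: "is_line M" unfolding M_def using is_line_span[OF m0] .
  have MV: "M \<subseteq> V" unfolding M_def using span_minimal[of "{m}" V] mV subV by simp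
  have sec: "let A = {y \<in> V. \<forall>w\<in>span {m}. (y - c) \<bullet> w = 0} in
        K0 \<inter> A = {} \<or> (\<exists>r\<ge>0. K0 \<inter> A = cball c r \<inter> A)" if c: "c \<in> span {m}" for c
    by (rule sections_from_invariance[OF subV mV m1 K0V cK0 cvK0 _ c]) (use invK0 in blast)
  have rev: "sym_body_of_revolution_in V K0 M"
    unfolding sym_body_of_revolution_in_def
    using scb lineM MV sec unfolding M_def by blast
  show ?thesis
    unfolding affine_sym_body_of_revolution_in_def V_def[symmetric]
    using linN injN surj rev KK LM by blast
qed


theorem mainTheorem13:
  fixes B :: "'a::euclidean_space set"
    and xs :: "nat \<Rightarrow> 'a" and x :: 'a
    and Ls :: "nat \<Rightarrow> 'a set" and L :: "'a set"
  assumes "sym_convex_body B"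
    and "\<And>i. xs i \<in> sphere 0 1" and "x \<in> sphere 0 1"
    and "xs \<longlonglongrightarrow> x"
    and "\<And>i. affine_sym_body_of_revolution_in {y. xs i \<bullet> y = 0} ({y. xs i \<bullet> y = 0} \<inter> B) (Ls i)"
    and "\<And>i. Ls i \<in> RP_lines"
    and "L \<in> RP_lines"
    and "limitin RP_topology Ls L sequentially"
  shows "affine_sym_body_of_revolution_in {y. x \<bullet> y = 0} ({y. x \<bullet> y = 0} \<inter> B) L"
proof -
  note scB = assms(1) and xsS = assms(2) and xsx = assms(4) and affi = assms(5)
  have cB: "compact B" and cvB: "convex B" and intne: "interior B \<noteq> {}" and symB: "uminus ` B = B"
    using scB unfolding sym_convex_body_def by auto
  have clB: "closed B" using cB by (rule compact_imp_closed)
  have xs1: "norm (xs i) = 1" for i using xsS[of i] by simp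
  obtain p where p: "p \<in> interior B" using intne by blast
  have ui: "uminus ` interior B = interior B" using interior_negations[of B] symB by simp
  have "- p \<in> uminus ` interior B" using p by (rule imageI)
  then have "- p \<in> interior B" using ui by simp
  then have "(1/2) *\<^sub>R p + (1/2) *\<^sub>R (- p) \<in> interior B"
    using convex_mid[OF convex_interior[OF cvB] p] by blast
  then have intB: "0 \<in> interior B" by simp
  obtain rho where rho: "rho > 0" "ball 0 rho \<subseteq> interior B"
    using intB open_interior open_contains_ball by blast
  then have ballB: "ball 0 rho \<subseteq> B" using interior_subset by blast
  obtain R where R: "R > 0" "\<And>w. w \<in> B \<Longrightarrow> norm w \<le> R"
    using compact_imp_bounded[OF cB] unfolding bounded_pos by blast
  define V where "V i = {y. xs i \<bullet> y = 0}" for i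
  have "\<forall>i. \<exists>q. linear (fst q) \<and> snd q \<in> V i \<and> norm (snd q) = 1 \<and> fst q ` V i \<subseteq> V i \<and>
     (\<forall>y\<in>V i. norm y \<le> 1/2 \<longrightarrow> fst q y \<in> B) \<and> (\<forall>y\<in>V i. fst q y \<in> B \<longrightarrow> norm y \<le> 2) \<and>
     (\<forall>y\<in>V i. \<forall>z\<in>V i. y \<bullet> snd q = z \<bullet> snd q \<and> norm y = norm z \<and> fst q y \<in> B \<longrightarrow> fst q z \<in> B) \<and>
     fst q (snd q) \<in> Ls i"
  proof
    fix i
    obtain Nn mn where H: "linear Nn \<and> mn \<in> V i \<and> norm mn = 1 \<and> Nn ` V i \<subseteq> V i \<and>
     (\<forall>y\<in>V i. norm y \<le> 1/2 \<longrightarrow> Nn y \<in> B) \<and> (\<forall>y\<in>V i. Nn y \<in> B \<longrightarrow> norm y \<le> 2) \<and>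
     (\<forall>y\<in>V i. \<forall>z\<in>V i. y \<bullet> mn = z \<bullet> mn \<and> norm y = norm z \<and> Nn y \<in> B \<longrightarrow> Nn z \<in> B) \<and> Nn mn \<in> Ls i"
      using normalize[OF cvB ballB rho(1) subspace_hyperplane affi[of i]] unfolding V_def by blast
    show "\<exists>q. linear (fst q) \<and> snd q \<in> V i \<and> norm (snd q) = 1 \<and> fst q ` V i \<subseteq> V i \<and>
     (\<forall>y\<in>V i. norm y \<le> 1/2 \<longrightarrow> fst q y \<in> B) \<and> (\<forall>y\<in>V i. fst q y \<in> B \<longrightarrow> norm y \<le> 2) \<and>
     (\<forall>y\<in>V i. \<forall>z\<in>V i. y \<bullet> snd q = z \<bullet> snd q \<and> norm y = norm z \<and> fst q y \<in> B \<longrightarrow> fst q z \<in> B) \<and>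
     fst q (snd q) \<in> Ls i" by (rule exI[of _ "(Nn, mn)"]) (simp only: fst_conv snd_conv, rule H)
  qed
  then obtain q where q: "\<And>i. linear (fst (q i)) \<and> snd (q i) \<in> V i \<and> norm (snd (q i)) = 1 \<and> fst (q i) ` V i \<subseteq> V i \<and>
     (\<forall>y\<in>V i. norm y \<le> 1/2 \<longrightarrow> fst (q i) y \<in> B) \<and> (\<forall>y\<in>V i. fst (q i) y \<in> B \<longrightarrow> norm y \<le> 2) \<and>
     (\<forall>y\<in>V i. \<forall>z\<in>V i. y \<bullet> snd (q i) = z \<bullet> snd (q i) \<and> norm y = norm z \<and> fst (q i) y \<in> B \<longrightarrow> fst (q i) z \<in> B) \<and>
     fst (q i) (snd (q i)) \<in> Ls i"
    using choice[where Q = "\<lambda>i q. linear (fst q) \<and> snd q \<in> V i \<and> norm (snd q) = 1 \<and> fst q ` V i \<subseteq> V i \<and>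
     (\<forall>y\<in>V i. norm y \<le> 1/2 \<longrightarrow> fst q y \<in> B) \<and> (\<forall>y\<in>V i. fst q y \<in> B \<longrightarrow> norm y \<le> 2) \<and>
     (\<forall>y\<in>V i. \<forall>z\<in>V i. y \<bullet> snd q = z \<bullet> snd q \<and> norm y = norm z \<and> fst q y \<in> B \<longrightarrow> fst q z \<in> B) \<and>
     fst q (snd q) \<in> Ls i"] by blast
  define N where "N i = fst (q i)" for i
  define ms where "ms i = snd (q i)" for i
  have linNi: "linear (N i)" and msV: "ms i \<in> V i" and ms1: "norm (ms i) = 1" and NVi: "N i ` V i \<subseteq> V i"
    and S1: "\<And>y. y \<in> V i \<Longrightarrow> norm y \<le> 1/2 \<Longrightarrow> N i y \<in> B"
    and S2: "\<And>y. y \<in> V i \<Longrightarrow> N i y \<in> B \<Longrightarrow> norm y \<le> 2"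
    and S3: "\<And>y z. y \<in> V i \<Longrightarrow> z \<in> V i \<Longrightarrow> y \<bullet> ms i = z \<bullet> ms i \<Longrightarrow> norm y = norm z \<Longrightarrow> N i y \<in> B \<Longrightarrow> N i z \<in> B"
    and NL: "N i (ms i) \<in> Ls i" for i
    using q[of i] unfolding N_def ms_def by blast+
  define P where "P i y = y - (xs i \<bullet> y) *\<^sub>R xs i" for i y
  have xx: "xs i \<bullet> xs i = 1" for i using xs1[of i] by (simp add: norm_eq_1)
  have PV: "P i y \<in> V i" for i y unfolding P_def V_def using xx[of i] by (simp add: inner_diff_right)
  have Pn: "norm (P i y) \<le> norm y" for i y
    using proj_bounds(2)[OF xs1[of i], of y] unfolding P_def by (simp add: inner_commute)
  have Pid: "P i y = y" if "y \<in> V i" for i y using that unfolding P_def V_def by simp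
  have blG: "bounded_linear (\<lambda>y. N i (P i y))" for i
  proof -
    have "linear (P i)" unfolding P_def linear_iff by (simp add: inner_add_right algebra_simps)
    then have "linear (N i \<circ> P i)" using linNi[of i] by (rule linear_compose)
    then show ?thesis by (simp add: o_def linear_conv_bounded_linear)
  qed
  define Fn where "Fn i = Blinfun (\<lambda>y. N i (P i y))" for i
  have Fapp: "blinfun_apply (Fn i) y = N i (P i y)" for i y
    unfolding Fn_def using bounded_linear_Blinfun_apply[OF blG[of i]] by simp
  have nG: "norm (N i (P i y)) \<le> 2 * R * norm y" for i y
  proof (cases "P i y = 0")
    case True then show ?thesis using linear_0[OF linNi[of i]] R(1) by simp
  next
    case False
    define p where "p = (1 / (2 * norm (P i y))) *\<^sub>R P i y"
    have pV: "p \<in> V i" unfolding p_def V_def using PV[of i y] unfolding V_def by simp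
    have np: "norm p = 1/2" unfolding p_def using False by simp
    have "N i p \<in> B" using S1[OF pV] np by simp
    then have "norm (N i p) \<le> R" using R(2) by blast
    moreover have "N i p = (1 / (2 * norm (P i y))) *\<^sub>R N i (P i y)" unfolding p_def
      using linNi[of i] by (simp add: linear_scale)
    ultimately have "norm (N i (P i y)) / (2 * norm (P i y)) \<le> R" using False by simp
    then have "norm (N i (P i y)) \<le> R * (2 * norm (P i y))" using False by (simp add: pos_divide_le_eq)
    also have "\<dots> \<le> R * (2 * norm y)" using Pn[of i y] R(1) by simp
    finally show ?thesis by simp
  qed
  have nF: "norm (Fn i) \<le> 2 * R" for i
    using norm_blinfun_bound[of "2 * R" "Fn i"] R(1) nG Fapp by simp
  have "bounded (range (\<lambda>i. (Fn i, ms i)))"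
  proof -
    have "bounded (range Fn)" unfolding bounded_pos using nF R(1) by (intro exI[of _ "2 * R"]) auto
    moreover have "bounded (range ms)" unfolding bounded_pos using ms1 by (intro exI[of _ 1]) auto
    ultimately have "bounded (range Fn \<times> range ms)" by (rule bounded_Times)
    then show ?thesis by (rule bounded_subset) auto
  qed
  then obtain l r where r: "strict_mono r" and lim: "((\<lambda>i. (Fn i, ms i)) \<circ> r) \<longlonglongrightarrow> l"
    using bounded_imp_convergent_subsequence by blast
  have limF: "(Fn \<circ> r) \<longlonglongrightarrow> fst l" using tendsto_fst[OF lim] by (simp add: o_def)
  have limm: "(ms \<circ> r) \<longlonglongrightarrow> snd l" using tendsto_snd[OF lim] by (simp add: o_def)
  obtain u us where u1: "norm u = 1" and Lu: "L = span {u}" and us1: "\<And>i. norm (us i) = 1"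
    and Lus: "\<And>i. Ls i = span {us i}" and usu: "us \<longlonglongrightarrow> u"
    using RP_conv[OF assms(6) assms(7) assms(8)] by blast
  show ?thesis
  proof (rule limit_part[where xs = "xs \<circ> r" and F = "Fn \<circ> r" and ms = "ms \<circ> r" and us = "us \<circ> r" and Ls = "Ls \<circ> r"])
    show "closed B" "convex B" "0 \<in> interior B" "uminus ` B = B" by fact+
    show "norm ((xs \<circ> r) j) = 1" for j using xs1 by simp
    show "(xs \<circ> r) \<longlonglongrightarrow> x" using LIMSEQ_subseq_LIMSEQ[OF xsx r] .
    show "(Fn \<circ> r) \<longlonglongrightarrow> fst l" by (rule limF)
    show "(ms \<circ> r) \<longlonglongrightarrow> snd l" by (rule limm)
    show "(xs \<circ> r) j \<bullet> (ms \<circ> r) j = 0" for j using msV[of "r j"] unfolding V_def by simp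
    show "norm ((ms \<circ> r) j) = 1" for j using ms1 by simp
    show "(xs \<circ> r) j \<bullet> blinfun_apply ((Fn \<circ> r) j) y = 0" for j y
      using NVi[of "r j"] PV[of "r j" y] unfolding Fapp o_def V_def by blast
    show "blinfun_apply ((Fn \<circ> r) j) y \<in> B" if "(xs \<circ> r) j \<bullet> y = 0" "norm y \<le> 1/2" for j y
      using that S1[of y "r j"] Pid[of y "r j"] unfolding Fapp o_def V_def by simp
    show "norm y \<le> 2" if "(xs \<circ> r) j \<bullet> y = 0" "blinfun_apply ((Fn \<circ> r) j) y \<in> B" for j y
      using that S2[of y "r j"] Pid[of y "r j"] unfolding Fapp o_def V_def by simp
    show "blinfun_apply ((Fn \<circ> r) j) z \<in> B"
      if "(xs \<circ> r) j \<bullet> y = 0" "(xs \<circ> r) j \<bullet> z = 0" "y \<bullet> (ms \<circ> r) j = z \<bullet> (ms \<circ> r) j" "norm y = norm z"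
        "blinfun_apply ((Fn \<circ> r) j) y \<in> B" for j y z
      using that S3[of y "r j" z] Pid[of y "r j"] Pid[of z "r j"] unfolding Fapp o_def V_def by simp
    show "blinfun_apply ((Fn \<circ> r) j) ((ms \<circ> r) j) \<in> (Ls \<circ> r) j" for j
      using NL[of "r j"] Pid[OF msV[of "r j"]] unfolding Fapp o_def by simp
    show "(us \<circ> r) \<longlonglongrightarrow> u" using LIMSEQ_subseq_LIMSEQ[OF usu r] .
    show "(Ls \<circ> r) j = span {(us \<circ> r) j}" for j using Lus by simp
    show "norm ((us \<circ> r) j) = 1" for j using us1 by simp
    show "L = span {u}" by (rule Lu)
  qed
qed

end
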